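(* For all non-negative integers $\beta$ and $k$, let $$X := \{(\alpha, l) \in \mathbb{Z}^2 : 0 \leq \alpha \leq \beta,\ 0 \leq l \leq k,\ (\alpha,l) \neq (\beta, k),\ (q-1) \mid (\beta + k -(\alpha + l)) \}.$$ Then $z(\chi_t^0, x, 0) = 1$, and $$z(\chi_t^\beta,x,-k) = 1 - x^{-1} \sum_{(\alpha,l) \in X}{\beta \choose \alpha}{k \choose l}t^\alpha \theta^l\, z(\chi_t^\alpha, x, -l).$$
   Context: Let $q$ be a power of a prime $p$, $A=\mathbb{F}_q[\theta]$ with $\theta$ an indeterminate, and for $d\ge 0$ let $A_+(d)$ be the set of monic polynomials in $A$ of degree $d$. Let $t$ be an indeterminate and $\chi_t:A\to\mathbb{F}_q[t]$ the $\mathbb{F}_q$-algebra morphism sending $\theta$ to $t$ (so $\chi_t(a)=a(t)$); $\chi_t(a)^0:=1$. For non-negative integers $\beta,k,d$ put $S_d(\chi_t^\beta,k):=\sum_{a\in A_+(d)}\chi_t(a)^\beta a^k\in A[t]$, and define the special series $z(\chi_t^\beta,x,-k):=\sum_{d\ge 0}x^{-d}S_d(\chi_t^\beta,k)\in A[t][[x^{-1}]]$. *)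

theory Defs
  imports "HOL-Computational_Algebra.Computational_Algebra"
begin

text \<open>F_q is a finite field type 'a (q = CARD('a)); A = F_q[theta] is 'a poly
(variable theta); A[t] is 'a poly poly (outer variable t, coefficients in A).\<close>

definition monic_deg :: "nat \<Rightarrow> ('a::{field,finite}) poly set" where
  "monic_deg d = {a. degree a = d \<and> lead_coeff a = 1}"

text \<open>chi_t(a) = a(t): replace theta by t, landing in F_q[t] inside A[t].\<close>
definition chi_t :: "('a::field) poly \<Rightarrow> 'a poly poly" where
  "chi_t a = map_poly (\<lambda>c. [:c:]) a"

definition tvar :: "('a::field) poly poly" where "tvar = [:0, 1:]"
definition theta :: "('a::field) poly poly" where "theta = [:[:0, 1:]:]"

definition S_d :: "nat \<Rightarrow> nat \<Rightarrow> nat \<Rightarrow> ('a::{field,finite}) poly poly" where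
  "S_d d \<beta> k = (\<Sum>a\<in>monic_deg d. chi_t a ^ \<beta> * [:a ^ k:])"

text \<open>z(chi_t^beta, x, -k) as a formal power series in the variable x^{-1}
(fps_X plays the role of x^{-1}).\<close>
definition zser :: "nat \<Rightarrow> nat \<Rightarrow> ('a::{field,finite}) poly poly fps" where
  "zser \<beta> k = Abs_fps (\<lambda>d. S_d d \<beta> k)"

definition Xset :: "nat \<Rightarrow> nat \<Rightarrow> nat \<Rightarrow> (nat \<times> nat) set" where
  "Xset q \<beta> k = {(\<alpha>, l). \<alpha> \<le> \<beta> \<and> l \<le> k \<and> (\<alpha>, l) \<noteq> (\<beta>, k) \<and>
       (q - 1) dvd (\<beta> + k - (\<alpha> + l))}"

end

theory Submission imports Defs begin

lemma card_zero: "of_nat (card (UNIV :: 'a::{ring_1,finite} set)) = (0::'a)"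
proof -
  have "(\<Sum>c\<in>UNIV. (c::'a) + 1) = (\<Sum>c\<in>UNIV. c)"
    by (rule sum.reindex_bij_witness[of _ "\<lambda>c. c - 1" "\<lambda>c. c+1"]) auto
  then show ?thesis by (simp add: sum.distrib)
qed

lemma card_ge2: "card (UNIV::'a::{field,finite} set) \<ge> 2"
proof -
  have "{0::'a, 1} \<subseteq> UNIV" by auto
  hence "card {0::'a,1} \<le> card (UNIV::'a set)" by (intro card_mono) auto
  thus ?thesis by simp
qed

lemma card_nz: "card {x::'a::{field,finite}. x \<noteq> 0} = card (UNIV::'a set) - 1"
proof -
  have "{x::'a. x \<noteq> 0} = UNIV - {0}" by auto
  thus ?thesis by (simp add: card_Diff_singleton)
qed

lemma fermat: fixes c :: "'a::{field,finite}" assumes "c \<noteq> 0"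
  shows "c ^ (card (UNIV::'a set) - 1) = 1"
proof -
  let ?N = "{x::'a. x \<noteq> 0}"
  have "(\<Prod>x\<in>?N. c * x) = (\<Prod>x\<in>?N. x)"
    by (rule prod.reindex_bij_witness[of _ "\<lambda>x. x / c" "\<lambda>x. c * x"]) (use assms in auto)
  hence "c ^ card ?N * (\<Prod>x\<in>?N. x) = (\<Prod>x\<in>?N. x)" by (simp add: prod.distrib)
  moreover have "(\<Prod>x\<in>?N. x) \<noteq> 0" by simp
  ultimately show ?thesis by (simp add: card_nz)
qed

lemma nondvd_exists: assumes "m > 0" "\<not> (card (UNIV::'a::{field,finite} set) - 1) dvd m"
  shows "\<exists>g::'a. g \<noteq> 0 \<and> g ^ m \<noteq> 1"
proof (rule ccontr)
  assume H: "\<not> ?thesis"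
  define q where "q = card (UNIV::'a set) - 1"
  have q1: "q \<ge> 1" using card_ge2[where 'a='a] by (simp add: q_def)
  define r where "r = m mod q"
  have r0: "r > 0" using assms(2) by (simp add: r_def q_def mod_greater_zero_iff_not_dvd)
  have rq: "r < q" using q1 by (simp add: r_def)
  have roots: "poly ([:-1:] + monom 1 r) x = 0" if "x \<noteq> 0" for x :: 'a
  proof -
    have "x ^ m = 1" using H that by auto
    moreover have "x ^ m = (x ^ q) ^ (m div q) * x ^ r"
      by (simp add: r_def power_mult[symmetric] power_add[symmetric])
    moreover have "x ^ q = 1" using fermat[OF that] by (simp add: q_def)
    ultimately show ?thesis by (simp add: poly_monom)
  qed
  have dg: "degree ([:-1::'a:] + monom 1 r) = r"
    using r0 by (subst degree_add_eq_right) (auto simp: degree_monom_eq)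
  have nz: "[:-1::'a:] + monom 1 r \<noteq> 0" using dg r0 by auto
  have "{x::'a. x \<noteq> 0} \<subseteq> {x. poly ([:-1:] + monom 1 r) x = 0}" using roots by auto
  hence "card {x::'a. x \<noteq> 0} \<le> card {x. poly ([:-1::'a:] + monom 1 r) x = 0}"
    by (intro card_mono) auto
  also have "\<dots> \<le> r" using card_poly_roots_bound[OF nz] dg by simp
  finally show False using rq by (simp add: card_nz q_def)
qed

lemma powsum: assumes "m > 0"
  shows "(\<Sum>c\<in>UNIV. (c::'a::{field,finite}) ^ m) = (if (card (UNIV::'a set) - 1) dvd m then -1 else 0)"
proof (cases "(card (UNIV::'a set) - 1) dvd m")
  case True
  from True obtain s where ms: "m = (card (UNIV::'a set) - 1) * s" by auto
  have "(\<Sum>c\<in>UNIV. (c::'a) ^ m) = 0 ^ m + (\<Sum>c\<in>UNIV - {0}. c ^ m)"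
    by (subst sum.remove[of _ 0]) auto
  also have "(\<Sum>c\<in>UNIV - {0}. (c::'a) ^ m) = (\<Sum>c::'a\<in>UNIV - {0}. (1::'a))"
    by (intro sum.cong refl) (auto simp: ms power_mult fermat[simplified])
  also have "(\<Sum>c::'a\<in>UNIV - {0}. (1::'a)) = of_nat (card (UNIV::'a set)) - 1"
  proof -
    have "(\<Sum>c::'a\<in>UNIV - {0}. (1::'a)) = of_nat (card (UNIV - {0::'a}))" by simp
    also have "card (UNIV - {0::'a}) = card (UNIV::'a set) - 1" by (simp add: card_Diff_singleton)
    also have "of_nat (card (UNIV::'a set) - 1) = of_nat (card (UNIV::'a set)) - (1::'a)"
      using card_ge2[where 'a='a] by (subst of_nat_diff) auto
    finally show ?thesis .
  qed
  finally show ?thesis using True assms by (simp add: card_zero)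
next
  case False
  then obtain g :: 'a where g: "g \<noteq> 0" "g ^ m \<noteq> 1" using nondvd_exists assms by blast
  have "(\<Sum>c\<in>UNIV. (g * c) ^ m) = (\<Sum>c\<in>UNIV. (c::'a) ^ m)"
    by (rule sum.reindex_bij_witness[of _ "\<lambda>x. x / g" "\<lambda>x. g * x"]) (use g in auto)
  hence "g ^ m * (\<Sum>c\<in>UNIV. (c::'a) ^ m) = (\<Sum>c\<in>UNIV. c ^ m)"
    by (simp add: power_mult_distrib sum_distrib_left)
  hence "(g ^ m - 1) * (\<Sum>c\<in>UNIV. (c::'a) ^ m) = 0" by (simp add: algebra_simps)
  thus ?thesis using g False by simp
qed


lemma monic_deg_0: "monic_deg 0 = {1::'a::{field,finite} poly}"
  by (auto simp: monic_deg_def elim!: degree_eq_zeroE)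

lemma monic_deg_Suc: "monic_deg (Suc d) =
   (\<lambda>(b,c). pCons c b) ` (monic_deg d \<times> (UNIV::'a::{field,finite} set))"
proof (intro equalityI subsetI)
  fix a :: "'a poly" assume a: "a \<in> monic_deg (Suc d)"
  obtain c b where ab: "a = pCons c b" by (cases a) auto
  have "b \<noteq> 0" using a ab by (auto simp: monic_deg_def)
  hence "b \<in> monic_deg d" using a ab by (auto simp: monic_deg_def)
  thus "a \<in> (\<lambda>(b,c). pCons c b) ` (monic_deg d \<times> UNIV)" using ab by auto
next
  fix a :: "'a poly" assume "a \<in> (\<lambda>(b,c). pCons c b) ` (monic_deg d \<times> UNIV)"
  then obtain b c where ab: "a = pCons c b" and b: "b \<in> monic_deg d" by auto
  have "b \<noteq> 0" using b by (auto simp: monic_deg_def)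
  thus "a \<in> monic_deg (Suc d)" using ab b by (auto simp: monic_deg_def)
qed

lemma inj_pc: "inj_on (\<lambda>(b,c). pCons c b) X"
  by (auto simp: inj_on_def)

lemma finite_monic: "finite (monic_deg d :: 'a::{field,finite} poly set)"
  by (induction d) (auto simp: monic_deg_0 monic_deg_Suc)

definition cst :: "'a::field \<Rightarrow> 'a poly poly" where "cst c = [:[:c:]:]"

lemma cst_add: "cst (x + y) = cst x + cst y" by (simp add: cst_def)
lemma cst_mult: "cst (x * y) = cst x * cst y" by (simp add: cst_def)
lemma cst_one: "cst 1 = 1" by (simp add: cst_def one_pCons[symmetric])
lemma cst_pow: "cst (x ^ n) = cst x ^ n" by (induction n) (auto simp: cst_mult cst_one)
lemma cst_sum: "cst (sum f A) = (\<Sum>x\<in>A. cst (f x))"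
  by (induction A rule: infinite_finite_induct) (auto simp: cst_add, auto simp: cst_def)
lemma cst_minus: "cst (-x) = - cst x" by (simp add: cst_def)
lemma cst_neg1: "cst (-1) = -1" using cst_minus[of 1] cst_one by metis

lemma chi_pCons: "chi_t (pCons c b) = cst c + tvar * chi_t b"
  by (simp add: chi_t_def map_poly_pCons cst_def tvar_def)

lemma const_pCons: "[:pCons c b:] = cst c + theta * [:b:]"
  by (simp add: cst_def theta_def)

lemma const_pow: "[:x:] ^ n = [:x ^ n:]"
  by (induction n) (auto simp: mult.commute)


lemma pt:
  fixes b :: "'a::{field,finite} poly" and c :: 'a
  assumes h: "\<alpha> \<le> \<beta>" "l \<le> k"
  shows "(of_nat (\<beta> choose \<alpha>) * (tvar * chi_t b) ^ \<alpha> * cst c ^ (\<beta> - \<alpha>)) *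
      (of_nat (k choose l) * (theta * [:b:]) ^ l * cst c ^ (k - l)) =
      (of_nat (\<beta> choose \<alpha>) * of_nat (k choose l) * tvar ^ \<alpha> * theta ^ l)
        * (chi_t b ^ \<alpha> * [:b ^ l:]) * cst c ^ (\<beta> + k - (\<alpha> + l))"
proof -
  have e: "\<beta> + k - (\<alpha> + l) = (\<beta> - \<alpha>) + (k - l)" using h by auto
  show ?thesis
    unfolding e power_add power_mult_distrib const_pow[symmetric] by (simp add: ac_simps)
qed

lemma term_expand:
  fixes b :: "'a::{field,finite} poly" and c :: 'a
  shows "chi_t (pCons c b) ^ \<beta> * [:(pCons c b) ^ k:] =
    (\<Sum>(\<alpha>,l)\<in>{..\<beta>}\<times>{..k}. (of_nat (\<beta> choose \<alpha>) * of_nat (k choose l) * tvar ^ \<alpha> * theta ^ l)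
        * (chi_t b ^ \<alpha> * [:b ^ l:]) * cst c ^ (\<beta> + k - (\<alpha> + l)))"
proof -
  have "chi_t (pCons c b) ^ \<beta> * [:(pCons c b) ^ k:] =
     (tvar * chi_t b + cst c) ^ \<beta> * (theta * [:b:] + cst c) ^ k"
    by (simp add: chi_pCons const_pCons const_pow[symmetric] add.commute)
  also have "\<dots> = (\<Sum>\<alpha>\<le>\<beta>. of_nat (\<beta> choose \<alpha>) * (tvar * chi_t b) ^ \<alpha> * cst c ^ (\<beta> - \<alpha>)) *
      (\<Sum>l\<le>k. of_nat (k choose l) * (theta * [:b:]) ^ l * cst c ^ (k - l))"
    by (simp only: binomial_ring)
  also have "\<dots> = (\<Sum>\<alpha>\<le>\<beta>. \<Sum>l\<le>k. (of_nat (\<beta> choose \<alpha>) * (tvar * chi_t b) ^ \<alpha> * cst c ^ (\<beta> - \<alpha>)) *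
      (of_nat (k choose l) * (theta * [:b:]) ^ l * cst c ^ (k - l)))"
    by (rule sum_product)
  also have "\<dots> = (\<Sum>(\<alpha>,l)\<in>{..\<beta>}\<times>{..k}. (of_nat (\<beta> choose \<alpha>) * (tvar * chi_t b) ^ \<alpha> * cst c ^ (\<beta> - \<alpha>)) *
      (of_nat (k choose l) * (theta * [:b:]) ^ l * cst c ^ (k - l)))"
    by (rule sum.cartesian_product)
  also have "\<dots> = (\<Sum>(\<alpha>,l)\<in>{..\<beta>}\<times>{..k}. (of_nat (\<beta> choose \<alpha>) * of_nat (k choose l) * tvar ^ \<alpha> * theta ^ l)
        * (chi_t b ^ \<alpha> * [:b ^ l:]) * cst c ^ (\<beta> + k - (\<alpha> + l)))"
    by (intro sum.cong refl, clarify, rule pt, auto)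
  finally show ?thesis .
qed


abbreviation "qq TYPE('a::{field,finite}) \<equiv> card (UNIV::'a set)"

lemma cst_P:
  assumes "\<alpha> \<le> \<beta>" "l \<le> k"
  shows "cst (\<Sum>c\<in>(UNIV::'a::{field,finite} set). c ^ (\<beta> + k - (\<alpha> + l))) =
     (if (\<alpha>, l) \<in> Xset (card (UNIV::'a set)) \<beta> k then -1 else 0)"
proof (cases "(\<alpha>, l) = (\<beta>, k)")
  case True
  then show ?thesis using card_zero[where 'a='a] by (simp add: Xset_def cst_def)
next
  case False
  hence m: "\<beta> + k - (\<alpha> + l) > 0" using assms by auto
  show ?thesis using False assms by (simp add: powsum[OF m] Xset_def cst_neg1, simp add: cst_def)
qed

lemma S_Suc:
  "(S_d (Suc d) \<beta> k :: 'a::{field,finite} poly poly) =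
   - (\<Sum>(\<alpha>, l)\<in>Xset (card (UNIV :: 'a set)) \<beta> k.
         (of_nat (\<beta> choose \<alpha>) * of_nat (k choose l) * tvar ^ \<alpha> * theta ^ l) * S_d d \<alpha> l)"
proof -
  let ?I = "{..\<beta>}\<times>{..k}"
  let ?K = "\<lambda>\<alpha> l. (of_nat (\<beta> choose \<alpha>) * of_nat (k choose l) * tvar ^ \<alpha> * theta ^ l) :: 'a poly poly"
  let ?f = "\<lambda>a::'a poly. chi_t a ^ \<beta> * [:a ^ k:]"
  have "S_d (Suc d) \<beta> k = (\<Sum>(b,c)\<in>monic_deg d \<times> (UNIV::'a set). ?f (pCons c b))"
    unfolding S_d_def monic_deg_Suc by (subst sum.reindex[OF inj_pc]) (simp add: case_prod_unfold o_def)
  also have "\<dots> = (\<Sum>b\<in>monic_deg d. \<Sum>c\<in>(UNIV::'a set). ?f (pCons c b))"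
    by (rule sum.cartesian_product[symmetric])
  also have "\<dots> = (\<Sum>b\<in>monic_deg d. \<Sum>c\<in>(UNIV::'a set). \<Sum>(\<alpha>,l)\<in>?I.
        ?K \<alpha> l * (chi_t b ^ \<alpha> * [:b ^ l:]) * cst c ^ (\<beta> + k - (\<alpha> + l)))"
    by (simp only: term_expand)
  also have "\<dots> = (\<Sum>b\<in>monic_deg d. \<Sum>(\<alpha>,l)\<in>?I.
        ?K \<alpha> l * (chi_t b ^ \<alpha> * [:b ^ l:]) * cst (\<Sum>c\<in>(UNIV::'a set). c ^ (\<beta> + k - (\<alpha> + l))))"
    by (subst sum.swap) (simp add: cst_sum cst_pow sum_distrib_left case_prod_unfold)
  also have "\<dots> = (\<Sum>(\<alpha>,l)\<in>?I. ?K \<alpha> l * S_d d \<alpha> l *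
         cst (\<Sum>c\<in>(UNIV::'a set). c ^ (\<beta> + k - (\<alpha> + l))))"
    by (subst sum.swap) (simp add: S_d_def sum_distrib_left sum_distrib_right case_prod_unfold mult.assoc)
  also have "\<dots> = (\<Sum>(\<alpha>,l)\<in>?I. if (\<alpha>,l) \<in> Xset (card (UNIV :: 'a set)) \<beta> k then - (?K \<alpha> l * S_d d \<alpha> l) else 0)"
    by (intro sum.cong refl) (auto simp: cst_P)
  also have "\<dots> = (\<Sum>(\<alpha>,l)\<in>?I \<inter> Xset (card (UNIV :: 'a set)) \<beta> k. - (?K \<alpha> l * S_d d \<alpha> l))"
  proof -
    have "(\<Sum>(\<alpha>,l)\<in>?I. if (\<alpha>,l) \<in> Xset (card (UNIV :: 'a set)) \<beta> k then - (?K \<alpha> l * S_d d \<alpha> l) else 0)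
      = (\<Sum>x\<in>?I. if x \<in> Xset (card (UNIV :: 'a set)) \<beta> k then (case x of (\<alpha>,l) \<Rightarrow> - (?K \<alpha> l * S_d d \<alpha> l)) else 0)"
      by (intro sum.cong refl) auto
    also have "\<dots> = (\<Sum>x\<in>?I \<inter> Xset (card (UNIV :: 'a set)) \<beta> k. (case x of (\<alpha>,l) \<Rightarrow> - (?K \<alpha> l * S_d d \<alpha> l)))"
      by (rule sum.inter_restrict[symmetric]) auto
    finally show ?thesis .
  qed
  also have "?I \<inter> Xset (card (UNIV :: 'a set)) \<beta> k = Xset (card (UNIV :: 'a set)) \<beta> k"
    by (auto simp: Xset_def)
  finally show ?thesis by (simp add: sum_negf case_prod_unfold)
qed


lemma S_0: "(S_d 0 \<beta> k :: 'a::{field,finite} poly poly) = 1"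
  by (simp add: S_d_def monic_deg_0 chi_t_def one_pCons[symmetric])

theorem proposition2p0p1:
  fixes \<beta> k :: nat
  shows "zser 0 0 = (1 :: ('a::{field,finite}) poly poly fps) \<and>
    (zser \<beta> k :: 'a poly poly fps) = 1 - fps_X *
      (\<Sum>(\<alpha>, l)\<in>Xset (card (UNIV :: 'a set)) \<beta> k.
         fps_const (of_nat (\<beta> choose \<alpha>) * of_nat (k choose l) * tvar ^ \<alpha> * theta ^ l)
         * zser \<alpha> l)"
proof
  have X00: "Xset q 0 0 = {}" for q by (auto simp: Xset_def)
  show "zser 0 0 = (1 :: ('a::{field,finite}) poly poly fps)"
  proof (rule fps_ext)
    fix n show "zser 0 0 $ n = (1 :: 'a poly poly fps) $ n"
      by (cases n) (simp_all add: zser_def S_0 S_Suc X00)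
  qed
  show "(zser \<beta> k :: 'a poly poly fps) = 1 - fps_X *
      (\<Sum>(\<alpha>, l)\<in>Xset (card (UNIV :: 'a set)) \<beta> k.
         fps_const (of_nat (\<beta> choose \<alpha>) * of_nat (k choose l) * tvar ^ \<alpha> * theta ^ l)
         * zser \<alpha> l)"
  proof (rule fps_ext)
    fix n show "zser \<beta> k $ n = (1 - fps_X *
      (\<Sum>(\<alpha>, l)\<in>Xset (card (UNIV :: 'a set)) \<beta> k.
         fps_const (of_nat (\<beta> choose \<alpha>) * of_nat (k choose l) * tvar ^ \<alpha> * theta ^ l)
         * zser \<alpha> l) :: 'a poly poly fps) $ n"
      by (cases n) (simp_all add: zser_def S_0 S_Suc fps_sum_nth case_prod_unfold)
  qed
qed

end
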